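(* Let $X'$ be a visual hyperbolic metric space with base point $o'$, and $X$ a geodesic hyperbolic metric space with base point $o$. Assume there is a map $f:\partial_\infty X'\to\partial_\infty X$ and a constant $c\ge0$ such that $|(f(\xi'_1)|f(\xi'_2))_o-(\xi'_1|\xi'_2)_{o'}|\le c$ for all $\xi'_1,\xi'_2\in\partial_\infty X'$. Then there exist a map $F:X'\to X$ and a constant $b\ge0$ such that $\big||F(x)F(y)|-|xy|\big|\le b$ for all $x,y\in X'$.
   Context: Gromov product: $(x|y)_z=\frac12(|zx|+|zy|-|xy|)$. A triple $(a_1,a_2,a_3)$ is a $\delta$-triple if $a_\mu\ge\min\{a_{\mu+1},a_{\mu+2}\}-\delta$ for $\mu=1,2,3$ (indices mod 3). $X$ is hyperbolic if for some $\delta\ge0$, $((x|y)_o,(y|z)_o,(x|z)_o)$ is a $\delta$-triple for all $o,x,y,z$. A sequence $(x_i)$ converges to infinity if $(x_i|x_j)_o\to\infty$; two such sequences are equivalent if $(x_i|x'_i)_o\to\infty$; $\partial_\infty X$ is the set of classes, and for $\xi,\xi'\in\partial_\infty X$, $(\xi|\xi')_o=\inf\liminf_i(x_i|x'_i)_o$ over representatives $(x_i)\in\xi$, $(x'_i)\in\xi'$; similarly $(x|\xi)_o$ for $x\in X$. A hyperbolic space $Y$ is visual if for some base point $o\in Y$ there is $D>0$ such that for every $y\in Y$ there is $\xi\in\partial_\infty Y$ with $|oy|\le(y|\xi)_o+D$. *)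

theory Defs
  imports "HOL-Analysis.Analysis" "HOL-Library.Extended_Real"
begin

definition gromov :: "'a::metric_space \<Rightarrow> 'a \<Rightarrow> 'a \<Rightarrow> real" where
  "gromov z x y = (dist z x + dist z y - dist x y) / 2"

definition delta_triple :: "real \<Rightarrow> real \<Rightarrow> real \<Rightarrow> real \<Rightarrow> bool" where
  "delta_triple \<delta> a1 a2 a3 \<longleftrightarrow>
     a1 \<ge> min a2 a3 - \<delta> \<and> a2 \<ge> min a3 a1 - \<delta> \<and> a3 \<ge> min a1 a2 - \<delta>"

definition gromov_hyperbolic :: "'a::metric_space itself \<Rightarrow> bool" where
  "gromov_hyperbolic _ \<longleftrightarrow> (\<exists>\<delta>\<ge>0. \<forall>(p::'a) x y z.
      delta_triple \<delta> (gromov p x y) (gromov p y z) (gromov p x z))"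

definition geodesic_space :: "'a::metric_space itself \<Rightarrow> bool" where
  "geodesic_space _ \<longleftrightarrow> (\<forall>x y::'a. \<exists>\<gamma>::real \<Rightarrow> 'a. \<gamma> 0 = x \<and> \<gamma> (dist x y) = y \<and>
      (\<forall>s\<in>{0..dist x y}. \<forall>t\<in>{0..dist x y}. dist (\<gamma> s) (\<gamma> t) = \<bar>s - t\<bar>))"

definition conv_inf :: "'a::metric_space \<Rightarrow> (nat \<Rightarrow> 'a) \<Rightarrow> bool" where
  "conv_inf p x \<longleftrightarrow> (\<forall>M. \<exists>N. \<forall>i\<ge>N. \<forall>j\<ge>N. gromov p (x i) (x j) \<ge> M)"

definition seq_equiv :: "'a::metric_space \<Rightarrow> (nat \<Rightarrow> 'a) \<Rightarrow> (nat \<Rightarrow> 'a) \<Rightarrow> bool" where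
  "seq_equiv p x y \<longleftrightarrow> filterlim (\<lambda>i. gromov p (x i) (y i)) at_top sequentially"

definition gbdry :: "'a::metric_space \<Rightarrow> (nat \<Rightarrow> 'a) set set" where
  "gbdry p = {{y. conv_inf p y \<and> seq_equiv p x y} | x. conv_inf p x}"

definition gromov_bd :: "'a::metric_space \<Rightarrow> (nat \<Rightarrow> 'a) set \<Rightarrow> (nat \<Rightarrow> 'a) set \<Rightarrow> ereal" where
  "gromov_bd p \<xi> \<eta> = (INF x\<in>\<xi>. INF y\<in>\<eta>. liminf (\<lambda>i. ereal (gromov p (x i) (y i))))"

definition gromov_pt_bd :: "'a::metric_space \<Rightarrow> 'a \<Rightarrow> (nat \<Rightarrow> 'a) set \<Rightarrow> ereal" where
  "gromov_pt_bd p z \<xi> = (INF y\<in>\<xi>. liminf (\<lambda>i. ereal (gromov p z (y i))))"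

definition visual_at :: "'a::metric_space \<Rightarrow> bool" where
  "visual_at p \<longleftrightarrow> gromov_hyperbolic TYPE('a) \<and>
     (\<exists>D>0. \<forall>y. \<exists>\<xi>\<in>gbdry p. ereal (dist p y) \<le> gromov_pt_bd p y \<xi> + ereal D)"

end

theory Submission
  imports Defs
begin

lemma gromov_commute: "gromov p x y = gromov p y x"
  unfolding gromov_def by (simp add: dist_commute add.commute)

lemma gromov_le: "gromov p x y \<le> dist p x"
  unfolding gromov_def using dist_triangle[of p y x] by (simp add: dist_commute)

lemma gromov_le2: "gromov p x y \<le> dist p y"
  using gromov_le[of p y x] by (simp add: gromov_commute)

lemma gromov_nonneg: "0 \<le> gromov p x y"
  unfolding gromov_def using dist_triangle[of x y p] by (simp add: dist_commute)

definition hypd :: "real \<Rightarrow> 'a::metric_space itself \<Rightarrow> bool" where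
  "hypd \<delta> _ \<longleftrightarrow> (\<forall>(p::'a) x y z. min (gromov p x y) (gromov p y z) - \<delta> \<le> gromov p x z)"

lemma hyp_obtain: "gromov_hyperbolic TYPE('a::metric_space) \<Longrightarrow> \<exists>\<delta>\<ge>0. hypd \<delta> TYPE('a)"
  unfolding gromov_hyperbolic_def hypd_def delta_triple_def by blast

lemma hypdD: "hypd \<delta> TYPE('a::metric_space) \<Longrightarrow> min (gromov p x y) (gromov p y z) - \<delta> \<le> gromov (p::'a) x z"
  unfolding hypd_def by blast

lemma class_mem: "\<alpha> \<in> gbdry p \<Longrightarrow> \<exists>a. a \<in> \<alpha>"
proof -
  assume "\<alpha> \<in> gbdry p"
  then obtain x where x: "conv_inf p x" "\<alpha> = {y. conv_inf p y \<and> seq_equiv p x y}"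
    unfolding gbdry_def by blast
  have "seq_equiv p x x"
    unfolding seq_equiv_def filterlim_at_top eventually_sequentially
  proof
    fix Z
    obtain N where "\<forall>i\<ge>N. \<forall>j\<ge>N. gromov p (x i) (x j) \<ge> Z" using x(1) unfolding conv_inf_def by blast
    then show "\<exists>N. \<forall>n\<ge>N. Z \<le> gromov p (x n) (x n)" by blast
  qed
  then show ?thesis using x by blast
qed

lemma class_equiv:
  assumes h: "hypd \<delta> TYPE('a::metric_space)" and "\<alpha> \<in> gbdry (p::'a)" and "a \<in> \<alpha>" and "b \<in> \<alpha>"
  shows "eventually (\<lambda>i. M \<le> gromov p (a i) (b i)) sequentially"
proof -
  obtain x where x: "conv_inf p x" "\<alpha> = {y. conv_inf p y \<and> seq_equiv p x y}"
    using assms(2) unfolding gbdry_def by blast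
  have ea: "eventually (\<lambda>i. M + \<delta> \<le> gromov p (x i) (a i)) sequentially"
    using assms(3) x unfolding seq_equiv_def filterlim_at_top by auto
  have eb: "eventually (\<lambda>i. M + \<delta> \<le> gromov p (x i) (b i)) sequentially"
    using assms(4) x unfolding seq_equiv_def filterlim_at_top by auto
  show ?thesis using eventually_conj[OF ea eb]
  proof (rule eventually_mono)
    fix i assume "M + \<delta> \<le> gromov p (x i) (a i) \<and> M + \<delta> \<le> gromov p (x i) (b i)"
    moreover have "min (gromov p (a i) (x i)) (gromov p (x i) (b i)) - \<delta> \<le> gromov p (a i) (b i)"
      using hypdD[OF h] by blast
    ultimately show "M \<le> gromov p (a i) (b i)" by (simp add: gromov_commute min_def split: if_splits)
  qed
qed

lemma chain3:
  assumes h: "hypd \<delta> TYPE('a::metric_space)" and d: "\<delta> \<ge> 0"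
  shows "min (gromov p x y) (min (gromov p y z) (gromov p z w)) - 2 * \<delta> \<le> gromov (p::'a) x w"
proof -
  have 1: "min (gromov p x y) (gromov p y w) - \<delta> \<le> gromov p x w" using hypdD[OF h] by blast
  have 2: "min (gromov p y z) (gromov p z w) - \<delta> \<le> gromov p y w" using hypdD[OF h] by blast
  show ?thesis using 1 2 d by (simp add: min_def split: if_splits)
qed

lemma lower_L:
  assumes h: "hypd \<delta> TYPE('a::metric_space)" and d: "\<delta> \<ge> 0"
    and A: "\<alpha> \<in> gbdry (p::'a)" and B: "\<beta> \<in> gbdry p"
    and HA: "\<forall>a\<in>\<alpha>. eventually (\<lambda>i. t - K \<le> gromov p u (a i)) sequentially"
    and HB: "\<forall>b\<in>\<beta>. eventually (\<lambda>i. s - K \<le> gromov p v (b i)) sequentially"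
    and K: "K \<ge> 0" and m: "ereal m \<le> gromov_bd p \<alpha> \<beta>" "m \<le> t" "m \<le> s"
  shows "m - K - 1 - 2 * \<delta> \<le> gromov p u v"
proof -
  obtain a where a: "a \<in> \<alpha>" using class_mem[OF A] by blast
  obtain b where b: "b \<in> \<beta>" using class_mem[OF B] by blast
  have lb: "gromov_bd p \<alpha> \<beta> \<le> liminf (\<lambda>i. ereal (gromov p (a i) (b i)))"
    unfolding gromov_bd_def by (rule INF_lower2[OF a], rule INF_lower[OF b])
  have "ereal (m - 1) < liminf (\<lambda>i. ereal (gromov p (a i) (b i)))"
  proof -
    have "ereal (m - 1) < ereal m" by simp
    then show ?thesis using m(1) lb by order
  qed
  then have e1: "eventually (\<lambda>i. m - 1 < gromov p (a i) (b i)) sequentially"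
    using less_LiminfD by fastforce
  have ev3: "eventually (\<lambda>i. m - 1 < gromov p (a i) (b i) \<and> t - K \<le> gromov p u (a i) \<and> s - K \<le> gromov p v (b i)) sequentially"
    using e1 HA[rule_format, OF a] HB[rule_format, OF b] by (intro eventually_conj)
  then obtain i where i: "m - 1 < gromov p (a i) (b i)" "t - K \<le> gromov p u (a i)" "s - K \<le> gromov p v (b i)"
  proof -
    assume r: "\<And>i. m - 1 < gromov p (a i) (b i) \<Longrightarrow> t - K \<le> gromov p u (a i) \<Longrightarrow> s - K \<le> gromov p v (b i) \<Longrightarrow> thesis"
    from ev3 obtain N where "\<forall>n\<ge>N. m - 1 < gromov p (a n) (b n) \<and> t - K \<le> gromov p u (a n) \<and> s - K \<le> gromov p v (b n)"
      unfolding eventually_sequentially by blast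
    then show thesis using r by blast
  qed
  have "min (gromov p u (a i)) (min (gromov p (a i) (b i)) (gromov p (b i) v)) - 2 * \<delta> \<le> gromov p u v"
    using chain3[OF h d] by blast
  moreover have "m - K - 1 \<le> min (gromov p u (a i)) (min (gromov p (a i) (b i)) (gromov p (b i) v))"
  proof (intro min.boundedI)
    show "m - K - 1 \<le> gromov p u (a i)" using i(2) m(2) by linarith
    show "m - K - 1 \<le> gromov p (a i) (b i)" using i(1) K by linarith
    show "m - K - 1 \<le> gromov p (b i) v" using i(3) m(3) gromov_commute[of p "b i" v] by linarith
  qed
  ultimately show ?thesis by linarith
qed

lemma upper_L:
  assumes h: "hypd \<delta> TYPE('a::metric_space)" and d: "\<delta> \<ge> 0"
    and HA: "\<forall>a\<in>\<alpha>. eventually (\<lambda>i. t - K \<le> gromov p u (a i)) sequentially"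
    and HB: "\<forall>b\<in>\<beta>. eventually (\<lambda>i. s - K \<le> gromov p v (b i)) sequentially"
  shows "ereal (min (t - K) (min (gromov p u v) (s - K)) - 2 * \<delta>) \<le> gromov_bd (p::'a) \<alpha> \<beta>"
  unfolding gromov_bd_def
proof (intro INF_greatest Liminf_bounded)
  fix a b assume a: "a \<in> \<alpha>" and b: "b \<in> \<beta>"
  have "eventually (\<lambda>i. t - K \<le> gromov p u (a i) \<and> s - K \<le> gromov p v (b i)) sequentially"
    using HA[rule_format, OF a] HB[rule_format, OF b] by (intro eventually_conj)
  then show "eventually (\<lambda>i. ereal (min (t - K) (min (gromov p u v) (s - K)) - 2 * \<delta>) \<le> ereal (gromov p (a i) (b i))) sequentially"
  proof (rule eventually_mono)
    fix i assume i: "t - K \<le> gromov p u (a i) \<and> s - K \<le> gromov p v (b i)"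
    have "min (gromov p (a i) u) (min (gromov p u v) (gromov p v (b i))) - 2 * \<delta> \<le> gromov p (a i) (b i)"
      using chain3[OF h d] by blast
    then show "ereal (min (t - K) (min (gromov p u v) (s - K)) - 2 * \<delta>) \<le> ereal (gromov p (a i) (b i))"
    proof -
      have "min (t - K) (min (gromov p u v) (s - K)) \<le> min (gromov p (a i) u) (min (gromov p u v) (gromov p v (b i)))"
        using i gromov_commute[of p "a i" u] by (intro min.mono) auto
      then have "min (t - K) (min (gromov p u v) (s - K)) - 2 * \<delta> \<le> gromov p (a i) (b i)"
        using \<open>min (gromov p (a i) u) _ - _ \<le> _\<close> by linarith
      then show ?thesis by simp
    qed
  qed
qed

lemma ereal_shift:
  fixes A B :: ereal
  assumes "B \<le> A + ereal c" "ereal r \<le> B"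
  shows "ereal (r - c) \<le> A"
  using assms by (cases A; cases B) auto

lemma combine:
  fixes A B :: ereal
  assumes AB: "B \<le> A + ereal c" "A \<le> B + ereal c"
    and g'le: "g' \<le> t" "g' \<le> s" and gle: "g \<le> t" "g \<le> s"
    and L1: "\<And>m. ereal m \<le> A \<Longrightarrow> m \<le> t \<Longrightarrow> m \<le> s \<Longrightarrow> m - C1 \<le> g'"
    and U1: "ereal (min (t - K1) (min g' (s - K1)) - 2 * d1) \<le> A"
    and L2: "\<And>m. ereal m \<le> B \<Longrightarrow> m \<le> t \<Longrightarrow> m \<le> s \<Longrightarrow> m - C2 \<le> g"
    and U2: "ereal (min (t - K2) (min g (s - K2)) - 2 * d2) \<le> B"
    and nn: "K1 \<ge> 0" "K2 \<ge> 0" "d1 \<ge> 0" "d2 \<ge> 0" "c \<ge> 0" "C1 \<ge> 0" "C2 \<ge> 0"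
  shows "\<bar>g - g'\<bar> \<le> C1 + C2 + K1 + K2 + 2 * d1 + 2 * d2 + c"
proof -
  define r2 where "r2 = min (t - K2) (min g (s - K2)) - 2 * d2"
  have "ereal (r2 - c) \<le> A" using ereal_shift[OF AB(1)] U2 r2_def by blast
  define m2 where "m2 = min (r2 - c) (min t s)"
  have "ereal m2 \<le> A" using \<open>ereal (r2 - c) \<le> A\<close> m2_def
    by (metis ereal_less_eq(3) min.cobounded1 order_trans)
  then have h1: "m2 - C1 \<le> g'" using L1 m2_def by simp
  have "r2 \<ge> g - K2 - 2 * d2" unfolding r2_def using gle nn by simp
  then have "m2 \<ge> g - K2 - 2 * d2 - c" unfolding m2_def using gle nn by simp
  with h1 have A1: "g - g' \<le> C1 + K2 + 2 * d2 + c" by linarith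
  define r1 where "r1 = min (t - K1) (min g' (s - K1)) - 2 * d1"
  have "ereal (r1 - c) \<le> B" using ereal_shift[OF AB(2)] U1 r1_def by blast
  define m1 where "m1 = min (r1 - c) (min t s)"
  have "ereal m1 \<le> B" using \<open>ereal (r1 - c) \<le> B\<close> m1_def
    by (metis ereal_less_eq(3) min.cobounded1 order_trans)
  then have h2: "m1 - C2 \<le> g" using L2 m1_def by simp
  have "r1 \<ge> g' - K1 - 2 * d1" unfolding r1_def using g'le nn by simp
  then have "m1 \<ge> g' - K1 - 2 * d1 - c" unfolding m1_def using g'le nn by simp
  with h2 have A2: "g' - g \<le> C2 + K1 + 2 * d1 + c" by linarith
  show ?thesis using A1 A2 nn by linarith
qed

lemma exists_point:
  assumes h: "hypd \<delta> TYPE('b::metric_space)" and d: "\<delta> \<ge> 0"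
    and geo: "geodesic_space TYPE('b)" and Z: "\<zeta> \<in> gbdry (p::'b)" and t: "t \<ge> 0"
  shows "\<exists>u. dist p u = t \<and> (\<forall>a\<in>\<zeta>. eventually (\<lambda>i. t - 2 * \<delta> \<le> gromov p u (a i)) sequentially)"
proof -
  obtain z where z: "z \<in> \<zeta>" using class_mem[OF Z] by blast
  have "conv_inf p z" using Z z unfolding gbdry_def by blast
  then obtain N where N: "\<forall>i\<ge>N. \<forall>j\<ge>N. t \<le> gromov p (z i) (z j)" unfolding conv_inf_def by blast
  define d where "d = dist p (z N)"
  have "gromov p (z N) (z N) = d" unfolding gromov_def d_def by simp
  with N have td: "t \<le> d" by auto
  obtain \<gamma> where g: "\<gamma> 0 = p" "\<gamma> d = z N"
    "\<forall>s\<in>{0..d}. \<forall>r\<in>{0..d}. dist (\<gamma> s) (\<gamma> r) = \<bar>s - r\<bar>"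
    using geo unfolding geodesic_space_def d_def by blast
  define u where "u = \<gamma> t"
  have i0: "0 \<in> {0..d}" "t \<in> {0..d}" "d \<in> {0..d}" using t td by auto
  have "dist (\<gamma> 0) (\<gamma> t) = \<bar>0 - t\<bar>" using g(3) i0 by blast
  then have du: "dist p u = t" using g(1) t unfolding u_def by simp
  have "dist (\<gamma> t) (\<gamma> d) = \<bar>t - d\<bar>" using g(3) i0 by blast
  then have duz: "dist u (z N) = d - t" using g(2) td unfolding u_def by simp
  have guz: "gromov p u (z N) = t" unfolding gromov_def using du duz d_def by simp
  show ?thesis
  proof (intro exI conjI ballI)
    show "dist p u = t" by (rule du)
    fix a assume a: "a \<in> \<zeta>"
    have e1: "eventually (\<lambda>i. t \<le> gromov p (z i) (a i)) sequentially"
      using class_equiv[OF h Z z a] .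
    have e2: "eventually (\<lambda>i. N \<le> i) sequentially" by (rule eventually_ge_at_top)
    show "eventually (\<lambda>i. t - 2 * \<delta> \<le> gromov p u (a i)) sequentially"
      using eventually_conj[OF e1 e2]
    proof (rule eventually_mono)
      fix i assume i: "t \<le> gromov p (z i) (a i) \<and> N \<le> i"
      have c1: "min (gromov p u (z N)) (gromov p (z N) (z i)) - \<delta> \<le> gromov p u (z i)"
        using hypdD[OF h] by blast
      have "t \<le> gromov p (z N) (z i)" using N i by auto
      then have c1': "t - \<delta> \<le> gromov p u (z i)" using c1 guz by linarith
      have c2: "min (gromov p u (z i)) (gromov p (z i) (a i)) - \<delta> \<le> gromov p u (a i)"
        using hypdD[OF h] by blast
      have "t - \<delta> \<le> min (gromov p u (z i)) (gromov p (z i) (a i))"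
        using c1' i d by simp
      then show "t - 2 * \<delta> \<le> gromov p u (a i)" using c2 by linarith
    qed
  qed
qed

theorem theorem4p8:
  fixes p' :: "'a::metric_space" and p :: "'b::metric_space"
    and f :: "(nat \<Rightarrow> 'a) set \<Rightarrow> (nat \<Rightarrow> 'b) set" and c :: real
  assumes "visual_at p'"
    and "gromov_hyperbolic TYPE('b)" and "geodesic_space TYPE('b)"
    and "f \<in> gbdry p' \<rightarrow> gbdry p"
    and "c \<ge> 0"
    and "\<forall>\<xi>1\<in>gbdry p'. \<forall>\<xi>2\<in>gbdry p'.
           gromov_bd p (f \<xi>1) (f \<xi>2) \<le> gromov_bd p' \<xi>1 \<xi>2 + ereal c \<and>
           gromov_bd p' \<xi>1 \<xi>2 \<le> gromov_bd p (f \<xi>1) (f \<xi>2) + ereal c"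
  shows "\<exists>F::'a \<Rightarrow> 'b. \<exists>b\<ge>0. \<forall>x y. \<bar>dist (F x) (F y) - dist x y\<bar> \<le> b"
proof -
  obtain d1 where d1: "d1 \<ge> 0" "hypd d1 TYPE('a)"
    using hyp_obtain assms(1) unfolding visual_at_def by blast
  obtain D where D: "D > 0" "\<forall>y. \<exists>\<xi>\<in>gbdry p'. ereal (dist p' y) \<le> gromov_pt_bd p' y \<xi> + ereal D"
    using assms(1) unfolding visual_at_def by blast
  obtain d2 where d2: "d2 \<ge> 0" "hypd d2 TYPE('b)"
    using hyp_obtain assms(2) by blast
  define Xi where "Xi x = (SOME \<xi>. \<xi> \<in> gbdry p' \<and> ereal (dist p' x) \<le> gromov_pt_bd p' x \<xi> + ereal D)" for x
  have Xi: "Xi x \<in> gbdry p' \<and> ereal (dist p' x) \<le> gromov_pt_bd p' x (Xi x) + ereal D" for x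
    unfolding Xi_def by (rule someI_ex) (use D(2) in blast)
  have P1: "\<forall>a\<in>Xi x. eventually (\<lambda>i. dist p' x - (D + 1) \<le> gromov p' x (a i)) sequentially" for x
  proof
    fix a assume a: "a \<in> Xi x"
    define G where "G = gromov_pt_bd p' x (Xi x)"
    have lb: "G \<le> liminf (\<lambda>i. ereal (gromov p' x (a i)))"
      unfolding G_def gromov_pt_bd_def by (rule INF_lower[OF a])
    have "ereal (dist p' x) \<le> G + ereal D" using Xi G_def by blast
    then have "ereal (dist p' x - (D + 1)) < G" by (cases G) auto
    then have "ereal (dist p' x - (D + 1)) < liminf (\<lambda>i. ereal (gromov p' x (a i)))"
      using lb by order
    then have "eventually (\<lambda>i. dist p' x - (D + 1) < gromov p' x (a i)) sequentially"
      using less_LiminfD by fastforce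
    then show "eventually (\<lambda>i. dist p' x - (D + 1) \<le> gromov p' x (a i)) sequentially"
      by (rule eventually_mono) simp
  qed
  have fX: "f (Xi x) \<in> gbdry p" for x using assms(4) Xi by blast
  define F where "F x = (SOME u. dist p u = dist p' x \<and>
      (\<forall>a\<in>f (Xi x). eventually (\<lambda>i. dist p' x - 2 * d2 \<le> gromov p u (a i)) sequentially))" for x
  have PF: "dist p (F x) = dist p' x \<and>
      (\<forall>a\<in>f (Xi x). eventually (\<lambda>i. dist p' x - 2 * d2 \<le> gromov p (F x) (a i)) sequentially)" for x
    unfolding F_def by (rule someI_ex) (rule exists_point[OF d2(2) d2(1) assms(3) fX], simp)
  define C where "C = (D + 1 + 1 + 2 * d1) + (2 * d2 + 1 + 2 * d2) + (D + 1) + 2 * d2 + 2 * d1 + 2 * d2 + c"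
  show ?thesis
  proof (intro exI conjI allI)
    show "0 \<le> 2 * C" unfolding C_def using D d1 d2 assms(5) by simp
    fix x y
    define t where "t = dist p' x"
    define s where "s = dist p' y"
    define g' where "g' = gromov p' x y"
    define g where "g = gromov p (F x) (F y)"
    define A where "A = gromov_bd p' (Xi x) (Xi y)"
    define B where "B = gromov_bd p (f (Xi x)) (f (Xi y))"
    have AB: "B \<le> A + ereal c" "A \<le> B + ereal c" using assms(6) Xi unfolding A_def B_def by blast+
    have Ft: "dist p (F x) = t" and Fs: "dist p (F y) = s" using PF t_def s_def by blast+
    have hx1: "\<forall>a\<in>Xi x. eventually (\<lambda>i. t - (D + 1) \<le> gromov p' x (a i)) sequentially"
      using P1 t_def by blast
    have hy1: "\<forall>b\<in>Xi y. eventually (\<lambda>i. s - (D + 1) \<le> gromov p' y (b i)) sequentially"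
      using P1 s_def by blast
    have hx2: "\<forall>a\<in>f (Xi x). eventually (\<lambda>i. t - 2 * d2 \<le> gromov p (F x) (a i)) sequentially"
      using PF t_def by blast
    have hy2: "\<forall>b\<in>f (Xi y). eventually (\<lambda>i. s - 2 * d2 \<le> gromov p (F y) (b i)) sequentially"
      using PF s_def by blast
    have "\<bar>g - g'\<bar> \<le> (D + 1 + 1 + 2 * d1) + (2 * d2 + 1 + 2 * d2) + (D + 1) + 2 * d2 + 2 * d1 + 2 * d2 + c"
    proof (rule combine[OF AB])
      show "g' \<le> t" "g' \<le> s" unfolding g'_def t_def s_def using gromov_le gromov_le2 by blast+
      show "g \<le> t" "g \<le> s" unfolding g_def using gromov_le gromov_le2 Ft Fs by metis+
      show "m - (D + 1 + 1 + 2 * d1) \<le> g'" if "ereal m \<le> A" "m \<le> t" "m \<le> s" for m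
        using lower_L[OF d1(2) d1(1) conjunct1[OF Xi] conjunct1[OF Xi] hx1 hy1 _ that[unfolded A_def]] D
        unfolding g'_def by simp
      show "m - (2 * d2 + 1 + 2 * d2) \<le> g" if "ereal m \<le> B" "m \<le> t" "m \<le> s" for m
        using lower_L[OF d2(2) d2(1) fX fX hx2 hy2 _ that[unfolded B_def]] d2
        unfolding g_def by simp
      show "ereal (min (t - (D + 1)) (min g' (s - (D + 1))) - 2 * d1) \<le> A"
        unfolding A_def g'_def by (rule upper_L[OF d1(2) d1(1) hx1 hy1])
      show "ereal (min (t - 2 * d2) (min g (s - 2 * d2)) - 2 * d2) \<le> B"
        unfolding B_def g_def by (rule upper_L[OF d2(2) d2(1) hx2 hy2])
    qed (use D d1 d2 assms(5) in auto)
    moreover have "dist x y = t + s - 2 * g'" unfolding g'_def t_def s_def gromov_def by (simp add: field_simps)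
    moreover have "dist (F x) (F y) = t + s - 2 * g" using Ft Fs unfolding g_def gromov_def by (simp add: field_simps)
    ultimately show "\<bar>dist (F x) (F y) - dist x y\<bar> \<le> 2 * C" unfolding C_def by (auto simp: abs_le_iff)
  qed
qed

end
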